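(* Let $-\frac1n<\alpha<0$ and $f=(1-\alpha\varphi)^{1/\alpha}\in\mathcal{C}^+_\alpha(\mathbb{R}^n)$. Then $$\delta J_\alpha(f,f)=n\,J(f)-\int_{\mathbb{R}^n}\varphi(x)\,f(x)^{1-\alpha}\,dx,$$ and $\delta J_\alpha(f,f)\in(-\infty,+\infty)$.
   Context: $\mathrm{Conv}(\mathbb{R}^n)$ is the set of proper, convex, lower semi-continuous $\varphi:\mathbb{R}^n\to\mathbb{R}\cup\{+\infty\}$; $\varphi$ is coercive if $\liminf_{|x|\to\infty}\varphi(x)/|x|>0$. For $\alpha<0$, $\mathcal{C}^+_\alpha(\mathbb{R}^n)$ is the set of $f=(1-\alpha\varphi)^{1/\alpha}$ with $\varphi\in\mathrm{Conv}(\mathbb{R}^n)$ nonnegative and coercive (convention: $f=0$ where $\varphi=+\infty$). The Legendre transform is $\varphi^*(y)=\sup_x\{\langle x,y\rangle-\varphi(x)\}$. For $\alpha$-concave $f=(1-\alpha\varphi)^{1/\alpha}$, $g=(1-\alpha\psi)^{1/\alpha}$ and $t>0$, $f\oplus_\alpha t\cdot_\alpha g:=\big(1-\alpha(\varphi^*+t\psi^* )^*\big)^{1/\alpha}$. $J(f)=\int_{\mathbb{R}^n}f\,dx$, and $\delta J_\alpha(f,g):=\lim_{t\to0^+}\frac{J(f\oplus_\alpha t\cdot_\alpha g)-J(f)}{t}$ whenever the limit exists and is finite. *)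

theory Defs
  imports "HOL-Analysis.Analysis"
begin

text \<open>Functions \<open>\<phi> : \<real>^n \<rightarrow> \<real> \<union> {+\<infinity>}\<close> are modelled as ereal-valued functions.\<close>

definition proper_fun :: "('a \<Rightarrow> ereal) \<Rightarrow> bool" where
  "proper_fun \<phi> \<longleftrightarrow> (\<exists>x. \<phi> x \<noteq> \<infinity>) \<and> (\<forall>x. \<phi> x \<noteq> -\<infinity>)"

text \<open>Convexity and lower semicontinuity via the epigraph.\<close>
definition epigraph :: "('a \<Rightarrow> ereal) \<Rightarrow> ('a \<times> real) set" where
  "epigraph \<phi> = {(x, t). \<phi> x \<le> ereal t}"

definition Conv :: "('a::euclidean_space \<Rightarrow> ereal) set" where
  "Conv = {\<phi>. proper_fun \<phi> \<and> convex (epigraph \<phi>) \<and> closed (epigraph \<phi>)}"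

definition coercive :: "('a::real_normed_vector \<Rightarrow> ereal) \<Rightarrow> bool" where
  "coercive \<phi> \<longleftrightarrow> Liminf at_infinity (\<lambda>x. \<phi> x / ereal (norm x)) > 0"

definition legendre :: "('a::real_inner \<Rightarrow> ereal) \<Rightarrow> 'a \<Rightarrow> ereal" where
  "legendre \<phi> y = (SUP x. ereal (inner x y) - \<phi> x)"

definition alpha_fn :: "real \<Rightarrow> ('a \<Rightarrow> ereal) \<Rightarrow> 'a \<Rightarrow> real" where
  "alpha_fn \<alpha> \<phi> x = (case \<phi> x of ereal r \<Rightarrow> (1 - \<alpha> * r) powr (1 / \<alpha>) | _ \<Rightarrow> 0)"

definition C_alpha_plus :: "real \<Rightarrow> ('a::euclidean_space \<Rightarrow> real) set" where
  "C_alpha_plus \<alpha> = {alpha_fn \<alpha> \<phi> | \<phi>. \<phi> \<in> Conv \<and> (\<forall>x. \<phi> x \<ge> 0) \<and> coercive \<phi>}"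

text \<open>\<open>f \<oplus>_\<alpha> t \<cdot>_\<alpha> g\<close> for \<open>f = (1-\<alpha>\<phi>)^{1/\<alpha>}\<close>, \<open>g = (1-\<alpha>\<psi>)^{1/\<alpha>}\<close>.\<close>
definition alpha_sum :: "real \<Rightarrow> ('a::real_inner \<Rightarrow> ereal) \<Rightarrow> real \<Rightarrow> ('a \<Rightarrow> ereal) \<Rightarrow> 'a \<Rightarrow> real" where
  "alpha_sum \<alpha> \<phi> t \<psi> = alpha_fn \<alpha> (legendre (\<lambda>y. legendre \<phi> y + ereal t * legendre \<psi> y))"

definition J :: "('a::euclidean_space \<Rightarrow> real) \<Rightarrow> real" where
  "J f = integral\<^sup>L lborel f"

end

theory Submission
  imports Defs
begin

lemma legendre_ge: "ereal (inner x y) - \<phi> x \<le> legendre \<phi> y"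
  unfolding legendre_def by (rule SUP_upper) auto

lemma Conv_props:
  assumes "\<phi> \<in> Conv"
  shows "convex (epigraph \<phi>)" "closed (epigraph \<phi>)" "\<exists>x. \<phi> x \<noteq> \<infinity>" "\<And>x. \<phi> x \<noteq> -\<infinity>"
  using assms by (auto simp: Conv_def proper_fun_def)

lemma sep_epi:
  fixes \<phi> :: "'a::euclidean_space \<Rightarrow> ereal"
  assumes "\<phi> \<in> Conv" "ereal a < \<phi> x0"
  shows "\<exists>u s b. s \<ge> 0 \<and> inner u x0 + s*a < b \<and> (\<forall>x r. \<phi> x \<le> ereal r \<longrightarrow> inner u x + s*r > b)"
proof -
  note cv = Conv_props[OF assms(1)]
  have "(x0,a) \<notin> epigraph \<phi>" using assms(2) by (auto simp: epigraph_def)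
  then obtain w b where w: "inner w (x0,a) < b" "\<forall>p\<in>epigraph \<phi>. inner w p > b"
    using separating_hyperplane_closed_point[OF cv(1,2)] by blast
  obtain u s where ws: "w = (u,s)" by (cases w)
  have H: "inner u x + s*r > b" if "\<phi> x \<le> ereal r" for x r
    using w(2) that ws by (auto simp: epigraph_def inner_Pair)
  have "s \<ge> 0"
  proof (rule ccontr)
    assume "\<not> s \<ge> 0"
    then have s: "s < 0" by simp
    obtain x1 where "\<phi> x1 \<noteq> \<infinity>" using cv(3) by blast
    with cv(4)[of x1] obtain r1 where r1: "\<phi> x1 = ereal r1" by (cases "\<phi> x1") auto
    define r where "r = max r1 ((b - inner u x1)/s)"
    have "\<phi> x1 \<le> ereal r" using r1 r_def by auto
    from H[OF this] have "s * r > b - inner u x1" by simp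
    moreover have "s * r \<le> s * ((b - inner u x1)/s)"
      using s r_def by (intro mult_left_mono_neg) auto
    ultimately show False using s by simp
  qed
  moreover have "inner u x0 + s*a < b" using w(1) ws by (simp add: inner_Pair)
  ultimately show ?thesis using H by blast
qed

lemma minorant_from_sep:
  fixes \<phi> :: "'a::euclidean_space \<Rightarrow> ereal"
  assumes "\<phi> \<in> Conv" "s > 0" "inner u x0 + s*a < b" "\<forall>x r. \<phi> x \<le> ereal r \<longrightarrow> inner u x + s*r > b"
  shows "\<exists>y c. (\<forall>x. ereal (inner x y - c) \<le> \<phi> x) \<and> a < inner x0 y - c"
proof (intro exI conjI allI)
  note cv = Conv_props[OF assms(1)]
  let ?y = "(-1/s) *\<^sub>R u" and ?c = "-b/s"
  have eq: "inner x ?y - ?c = (b - inner u x)/s" for x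
    using assms(2) by (simp add: inner_commute field_simps)
  fix x
  show "ereal (inner x ?y - ?c) \<le> \<phi> x"
  proof (cases "\<phi> x")
    case (real r)
    then have "inner u x + s*r > b" using assms(4) by auto
    then have "(b - inner u x)/s < r" using assms(2) by (simp add: field_simps)
    then show ?thesis using real eq by simp
  qed (use cv(4) in auto)
next
  let ?y = "(-1/s) *\<^sub>R u" and ?c = "-b/s"
  have eq: "inner x ?y - ?c = (b - inner u x)/s" for x
    using assms(2) by (simp add: inner_commute field_simps)
  show "a < inner x0 ?y - ?c" unfolding eq using assms(2,3) by (simp add: field_simps)
qed

lemma minorant_fin:
  fixes \<phi> :: "'a::euclidean_space \<Rightarrow> ereal"
  assumes "\<phi> \<in> Conv" "ereal a < \<phi> x0" "\<phi> x0 \<noteq> \<infinity>"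
  shows "\<exists>y c. (\<forall>x. ereal (inner x y - c) \<le> \<phi> x) \<and> a < inner x0 y - c"
proof -
  note cv = Conv_props[OF assms(1)]
  obtain u s b where usb: "s \<ge> 0" "inner u x0 + s*a < b" "\<forall>x r. \<phi> x \<le> ereal r \<longrightarrow> inner u x + s*r > b"
    using sep_epi[OF assms(1,2)] by blast
  obtain r0 where r0: "\<phi> x0 = ereal r0" using assms(3) cv(4)[of x0] by (cases "\<phi> x0") auto
  have "inner u x0 + s*r0 > b" using usb(3) r0 by auto
  with usb(2) have "s * (r0 - a) > 0" by (simp add: algebra_simps)
  moreover have "r0 > a" using assms(2) r0 by simp
  ultimately have "s > 0" using usb(1) by (simp add: zero_less_mult_iff)
  then show ?thesis using minorant_from_sep[OF assms(1) _ usb(2,3)] by blast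
qed

lemma minorant:
  fixes \<phi> :: "'a::euclidean_space \<Rightarrow> ereal"
  assumes "\<phi> \<in> Conv" "ereal a < \<phi> x0"
  shows "\<exists>y c. (\<forall>x. ereal (inner x y - c) \<le> \<phi> x) \<and> a < inner x0 y - c"
proof (cases "\<phi> x0 = \<infinity>")
  case False then show ?thesis using minorant_fin[OF assms] by blast
next
  case True
  note cv = Conv_props[OF assms(1)]
  obtain u s b where usb: "s \<ge> 0" "inner u x0 + s*a < b" "\<forall>x r. \<phi> x \<le> ereal r \<longrightarrow> inner u x + s*r > b"
    using sep_epi[OF assms(1,2)] by blast
  show ?thesis
  proof (cases "s > 0")
    case True then show ?thesis using minorant_from_sep[OF assms(1) _ usb(2,3)] by blast
  next
    case False
    then have s0: "s = 0" using usb(1) by simp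
    obtain x1 where "\<phi> x1 \<noteq> \<infinity>" using cv(3) by blast
    with cv(4)[of x1] obtain r1 where r1: "\<phi> x1 = ereal r1" by (cases "\<phi> x1") auto
    then have "ereal (r1 - 1) < \<phi> x1" by simp
    from minorant_fin[OF assms(1) this] r1 obtain y0 c0 where
      yc: "\<forall>x. ereal (inner x y0 - c0) \<le> \<phi> x" by auto
    define \<delta> where "\<delta> = b - inner u x0"
    have \<delta>: "\<delta> > 0" using usb(2) s0 \<delta>_def by simp
    define L where "L = max 0 ((a - (inner x0 y0 - c0) + 1)/\<delta>)"
    have L0: "L \<ge> 0" by (simp add: L_def)
    have eq: "inner x (y0 - L *\<^sub>R u) - (c0 - L*b) = inner x y0 - c0 + L*(b - inner u x)" for x
      by (simp add: inner_diff_right inner_commute algebra_simps)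
    show ?thesis
    proof (intro exI conjI allI)
      fix x
      show "ereal (inner x (y0 - L *\<^sub>R u) - (c0 - L*b)) \<le> \<phi> x"
      proof (cases "\<phi> x")
        case (real r)
        then have "inner u x + s*r > b" using usb(3) by auto
        then have "inner u x > b" using s0 by simp
        then have "L*(b - inner u x) \<le> 0" using L0 by (simp add: mult_nonneg_nonpos)
        then have "inner x (y0 - L *\<^sub>R u) - (c0 - L*b) \<le> inner x y0 - c0" using eq by simp
        then have "ereal (inner x (y0 - L *\<^sub>R u) - (c0 - L*b)) \<le> ereal (inner x y0 - c0)" by simp
        also have "\<dots> \<le> \<phi> x" using yc by blast
        finally show ?thesis .
      qed (use cv(4) in auto)
    next
      have "(a - (inner x0 y0 - c0) + 1) / \<delta> \<le> L" by (simp add: L_def)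
      then have "L * \<delta> \<ge> (a - (inner x0 y0 - c0) + 1)"
        using \<delta> by (simp add: pos_divide_le_eq)
      then show "a < inner x0 (y0 - L *\<^sub>R u) - (c0 - L*b)"
        unfolding eq \<delta>_def by simp
    qed
  qed
qed

lemma biconjugate:
  fixes \<phi> :: "'a::euclidean_space \<Rightarrow> ereal"
  assumes "\<phi> \<in> Conv"
  shows "legendre (legendre \<phi>) x = \<phi> x"
proof (rule antisym)
  note cv = Conv_props[OF assms(1)]
  show "legendre (legendre \<phi>) x \<le> \<phi> x"
    unfolding legendre_def[of "legendre \<phi>"]
  proof (rule SUP_least)
    fix y
    show "ereal (inner y x) - legendre \<phi> y \<le> \<phi> x"
    proof (cases "\<phi> x")
      case (real r)
      have ge: "ereal (inner x y - r) \<le> legendre \<phi> y" using legendre_ge[of x y \<phi>] real by simp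
      have "ereal (inner y x) - legendre \<phi> y \<le> ereal (inner y x) - ereal (inner x y - r)"
        by (rule ereal_minus_mono[OF order_refl ge])
      also have "\<dots> = \<phi> x" using real by (simp add: inner_commute)
      finally show ?thesis .
    qed (use cv(4) in auto)
  qed
next
  show "\<phi> x \<le> legendre (legendre \<phi>) x"
  proof (rule ccontr)
    assume "\<not> ?thesis"
    then have "legendre (legendre \<phi>) x < \<phi> x" by simp
    then obtain a where a: "legendre (legendre \<phi>) x < ereal a" "ereal a < \<phi> x"
      using ereal_dense2 by blast
    from minorant[OF assms a(2)] obtain y c where yc: "\<forall>z. ereal (inner z y - c) \<le> \<phi> z" "a < inner x y - c"
      by blast
    have "legendre \<phi> y \<le> ereal c"
      unfolding legendre_def
    proof (rule SUP_least)
      fix z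
      show "ereal (inner z y) - \<phi> z \<le> ereal c"
        using yc(1)[rule_format, of z] Conv_props(4)[OF assms, of z]
        by (cases "\<phi> z") auto
    qed
    then have "ereal (inner y x) - ereal c \<le> ereal (inner y x) - legendre \<phi> y"
      by (rule ereal_minus_mono[OF order_refl])
    also have "\<dots> \<le> legendre (legendre \<phi>) x" by (rule legendre_ge)
    finally have le: "ereal (inner x y - c) \<le> legendre (legendre \<phi>) x" by (simp add: inner_commute)
    have "ereal (inner x y - c) < ereal a" using le a(1) by (rule le_less_trans)
    with yc(2) show False by simp
  qed
qed


definition gs :: "real \<Rightarrow> ('a \<Rightarrow> ereal) \<Rightarrow> real \<Rightarrow> 'a \<Rightarrow> real" where
  "gs \<alpha> \<phi> s z = (case \<phi> z of ereal r \<Rightarrow> (1 - \<alpha> * (s * r)) powr (1/\<alpha>) | _ \<Rightarrow> 0)"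

lemma legendre_scale:
  fixes \<psi> :: "'a::real_inner \<Rightarrow> ereal"
  assumes c: "c > 0"
  shows "legendre (\<lambda>y. ereal c * \<psi> y) x = ereal c * legendre \<psi> (x /\<^sub>R c)"
proof -
  have eq: "ereal (inner y x) - ereal c * \<psi> y = (ereal (inner y (x /\<^sub>R c)) - \<psi> y) * ereal c" for y
    using c by (cases "\<psi> y") (simp_all add: field_simps)
  have "legendre (\<lambda>y. ereal c * \<psi> y) x = (SUP y. (ereal (inner y (x /\<^sub>R c)) - \<psi> y) * ereal c)"
    unfolding legendre_def eq ..
  also have "\<dots> = (SUP y. ereal (inner y (x /\<^sub>R c)) - \<psi> y) * ereal c"
    using c by (intro Sup_ereal_mult_right'[symmetric]) auto
  also have "\<dots> = ereal c * legendre \<psi> (x /\<^sub>R c)"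
    unfolding legendre_def by (simp add: mult.commute)
  finally show ?thesis .
qed

lemma alpha_fn_scaled:
  assumes "s > 0"
  shows "alpha_fn \<alpha> (\<lambda>z. ereal s * \<phi> z) z = gs \<alpha> \<phi> s z"
  using assms by (cases "\<phi> z") (simp_all add: alpha_fn_def gs_def)

lemma alpha_fn_gs1: "alpha_fn \<alpha> \<phi> = gs \<alpha> \<phi> 1"
  by (rule ext) (simp add: alpha_fn_def gs_def split: ereal.split)

lemma alpha_sum_eq:
  fixes \<phi> :: "'a::euclidean_space \<Rightarrow> ereal"
  assumes "\<phi> \<in> Conv" "t > 0"
  shows "alpha_sum \<alpha> \<phi> t \<phi> x = gs \<alpha> \<phi> (1+t) (x /\<^sub>R (1+t))"
proof -
  have e1: "legendre \<phi> y + ereal t * legendre \<phi> y = ereal (1+t) * legendre \<phi> y" for y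
    using assms(2) by (cases "legendre \<phi> y") (simp_all add: algebra_simps)
  have "legendre (\<lambda>y. legendre \<phi> y + ereal t * legendre \<phi> y) = (\<lambda>x. ereal (1+t) * \<phi> (x /\<^sub>R (1+t)))"
    unfolding e1 using assms by (simp add: legendre_scale biconjugate fun_eq_iff)
  then have "alpha_sum \<alpha> \<phi> t \<phi> x = alpha_fn \<alpha> (\<lambda>x. ereal (1+t) * \<phi> (x /\<^sub>R (1+t))) x"
    by (simp add: alpha_sum_def)
  also have "\<dots> = gs \<alpha> \<phi> (1+t) (x /\<^sub>R (1+t))"
    using assms(2) by (simp add: alpha_fn_def gs_def split: ereal.split)
  finally show ?thesis .
qed

lemma Conv_measurable:
  fixes \<phi> :: "'a::euclidean_space \<Rightarrow> ereal"
  assumes "\<phi> \<in> Conv"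
  shows "\<phi> \<in> borel_measurable borel"
proof (rule borel_measurableI_le)
  note cv = Conv_props[OF assms]
  fix y :: ereal
  show "{x \<in> space borel. \<phi> x \<le> y} \<in> sets borel"
  proof (cases y)
    case (real r)
    have "{x. \<phi> x \<le> y} = (\<lambda>x. (x, r)) -` epigraph \<phi>" using real by (auto simp: epigraph_def)
    moreover have "closed ((\<lambda>x. (x, r)) -` epigraph \<phi>)"
      by (intro closed_vimage cv(2)) (intro continuous_intros)
    ultimately show ?thesis by simp
  next
    case PInf then show ?thesis by simp
  next
    case MInf
    then have "{x \<in> space borel. \<phi> x \<le> y} = {}" using cv(4) by auto
    then show ?thesis by simp
  qed
qed

lemma gs_alt:
  assumes "\<And>z. \<phi> z \<noteq> -\<infinity>"
  shows "gs \<alpha> \<phi> s = (\<lambda>z. if \<phi> z = \<infinity> then 0 else (1 - \<alpha> * (s * real_of_ereal (\<phi> z))) powr (1/\<alpha>))"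
proof
  fix z show "gs \<alpha> \<phi> s z = (if \<phi> z = \<infinity> then 0 else (1 - \<alpha> * (s * real_of_ereal (\<phi> z))) powr (1/\<alpha>))"
    using assms[of z] by (cases "\<phi> z") (simp_all add: gs_def)
qed

lemma gs_measurable:
  fixes \<phi> :: "'a::euclidean_space \<Rightarrow> ereal"
  assumes "\<phi> \<in> Conv"
  shows "gs \<alpha> \<phi> s \<in> borel_measurable borel"
proof -
  have [measurable]: "\<phi> \<in> borel_measurable borel" by (rule Conv_measurable[OF assms])
  show ?thesis unfolding gs_alt[OF Conv_props(4)[OF assms]] by measurable
qed


lemma one_dim_half:
  fixes e :: real assumes e: "e < -1"
  shows "(\<integral>\<^sup>+x. ennreal ((1 + x) powr e) * indicator {0..} x \<partial>lborel) < \<infinity>"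
proof -
  have "(\<integral>\<^sup>+x. ennreal ((1 + x) powr e) * indicator {0..} x \<partial>lborel)
      = ennreal (0 - (1 + 0) powr (e+1) / (e+1))"
  proof (rule nn_integral_FTC_atLeast)
    show "(\<lambda>x::real. (1 + x) powr e) \<in> borel_measurable borel" by measurable
    fix x :: real assume x: "0 \<le> x"
    show "((\<lambda>x. (1 + x) powr (e+1) / (e+1)) has_real_derivative (1 + x) powr e) (at x)"
    proof -
      have d1: "((\<lambda>z. z powr (e+1)) has_real_derivative (e+1) * (1 + x) powr (e+1-1)) (at (1+x))"
        using x by (intro has_real_derivative_powr) auto
      have d2: "((\<lambda>x. 1 + x) has_real_derivative 1) (at x)"
        by (rule derivative_eq_intros | simp)+
      have "((\<lambda>x. (1 + x) powr (e+1) / (e+1)) has_real_derivative ((e+1) * (1 + x) powr (e+1-1) * 1) / (e+1)) (at x)"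
        by (rule DERIV_cdivide[OF DERIV_chain2[OF d1 d2]])
      moreover have "((e+1) * (1 + x) powr (e+1-1) * 1) / (e+1) = (1 + x) powr e"
        using e by simp
      ultimately show ?thesis by simp
    qed
    show "0 \<le> (1 + x) powr e" by simp
  next
    show "((\<lambda>x::real. (1 + x) powr (e+1) / (e+1)) \<longlongrightarrow> 0) at_top"
    proof -
      have "((\<lambda>x::real. (1 + x) powr (e+1)) \<longlongrightarrow> 0) at_top"
        using e by (intro tendsto_neg_powr filterlim_tendsto_add_at_top[OF tendsto_const filterlim_ident]) auto
      then show ?thesis using tendsto_divide_zero by blast
    qed
  qed
  then show ?thesis by simp
qed

lemma one_dim:
  fixes e :: real assumes e: "e < -1"
  shows "(\<integral>\<^sup>+x. ennreal ((1 + \<bar>x\<bar>) powr e) \<partial>lborel) < \<infinity>"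
proof -
  let ?h = "\<lambda>x::real. ennreal ((1 + x) powr e) * indicator {0..} x"
  have le: "ennreal ((1 + \<bar>x\<bar>) powr e) \<le> ?h x + ?h (0 + -1 * x)" for x :: real
  proof (cases "x \<ge> 0")
    case True then show ?thesis by (simp add: indicator_def)
  next
    case False then have "\<bar>x\<bar> = 0 + -1 * x" "0 + -1 * x \<in> {0..}" by auto
    then show ?thesis by (simp del: mult_minus_left mult_1 add: indicator_def)
  qed
  have "(\<integral>\<^sup>+x. ennreal ((1 + \<bar>x\<bar>) powr e) \<partial>lborel) \<le> (\<integral>\<^sup>+x. ?h x + ?h (0 + -1 * x) \<partial>lborel)"
    by (intro nn_integral_mono le)
  also have "\<dots> = (\<integral>\<^sup>+x. ?h x \<partial>lborel) + (\<integral>\<^sup>+x. ?h (0 + -1 * x) \<partial>lborel)"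
    by (intro nn_integral_add) auto
  also have "(\<integral>\<^sup>+x. ?h (0 + -1 * x) \<partial>lborel) = (\<integral>\<^sup>+x. ?h x \<partial>lborel)"
    using nn_integral_real_affine[of ?h "-1" 0] by simp
  finally show ?thesis using one_dim_half[OF e]
    by (simp add: ennreal_add_eq_top top.not_eq_extremum order_le_less_trans)
qed

lemma integrable_decay:
  fixes q :: real
  assumes q: "q < - real DIM('a::euclidean_space)"
  shows "integrable lborel (\<lambda>z::'a. (1 + norm z) powr q)"
proof -
  define n where "n = real DIM('a)"
  have n: "n \<ge> 1" unfolding n_def by simp
  define e where "e = q / n"
  have e: "e < -1" using q n unfolding e_def n_def by (simp add: field_simps)
  have fin: "(\<integral>\<^sup>+(z::'a). (\<Prod>b\<in>Basis. ennreal ((1 + \<bar>z \<bullet> b\<bar>) powr e)) \<partial>lborel) < \<infinity>"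
  proof -
    have "(\<integral>\<^sup>+z. (\<Prod>b\<in>(Basis::'a set). ennreal ((1 + \<bar>z \<bullet> b\<bar>) powr e)) \<partial>lborel)
       = (\<Prod>b\<in>(Basis::'a set). (\<integral>\<^sup>+x. ennreal ((1 + \<bar>x\<bar>) powr e) \<partial>lborel))"
      by (rule nn_integral_lborel_prod[where f="\<lambda>b x. ennreal ((1 + \<bar>x\<bar>) powr e)"]) auto
    also have "\<dots> < \<infinity>"
      using one_dim[OF e] by (simp add: power_less_top_ennreal)
    finally show ?thesis .
  qed
  have P_int: "integrable lborel (\<lambda>z::'a. \<Prod>b\<in>Basis. (1 + \<bar>z \<bullet> b\<bar>) powr e)"
  proof (rule integrableI_nonneg)
    show "(\<lambda>z::'a. \<Prod>b\<in>Basis. (1 + \<bar>z \<bullet> b\<bar>) powr e) \<in> borel_measurable lborel" by measurable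
    show "AE x in lborel. 0 \<le> (\<Prod>b\<in>Basis. (1 + \<bar>x \<bullet> b\<bar>) powr e)" by (intro AE_I2 prod_nonneg) simp
    have eq: "(\<integral>\<^sup>+(x::'a). ennreal (\<Prod>b\<in>Basis. (1 + \<bar>x \<bullet> b\<bar>) powr e) \<partial>lborel)
       = (\<integral>\<^sup>+(z::'a). (\<Prod>b\<in>Basis. ennreal ((1 + \<bar>z \<bullet> b\<bar>) powr e)) \<partial>lborel)"
      by (rule nn_integral_cong) (simp add: prod_ennreal)
    show "(\<integral>\<^sup>+(x::'a). ennreal (\<Prod>b\<in>Basis. (1 + \<bar>x \<bullet> b\<bar>) powr e) \<partial>lborel) < \<infinity>"
      unfolding eq by (rule fin)
  qed
  have bound: "norm ((1 + norm x) powr q) \<le> norm (\<Prod>b\<in>Basis. (1 + \<bar>x \<bullet> b\<bar>) powr e)" for x :: 'a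
  proof -
    have "(1 + norm x) powr q = (\<Prod>b\<in>(Basis::'a set). (1 + norm x) powr e)"
    proof -
      have "((1 + norm x) powr e) ^ DIM('a) = ((1 + norm x) powr e) powr (real DIM('a))"
        by (rule powr_realpow[symmetric]) (smt (verit) norm_ge_zero powr_gt_zero)
      also have "\<dots> = (1 + norm x) powr q"
        using n by (simp add: powr_powr e_def n_def)
      finally show ?thesis by simp
    qed
    also have "\<dots> \<le> (\<Prod>b\<in>Basis. (1 + \<bar>x \<bullet> b\<bar>) powr e)"
    proof (rule prod_mono)
      fix b :: 'a assume b: "b \<in> Basis"
      have "\<bar>x \<bullet> b\<bar> \<le> norm x" using b by (rule Basis_le_norm)
      then show "0 \<le> (1 + norm x) powr e \<and> (1 + norm x) powr e \<le> (1 + \<bar>x \<bullet> b\<bar>) powr e"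
        using e by (auto intro!: powr_mono2')
    qed
    finally show ?thesis by (simp add: prod_nonneg)
  qed
  show ?thesis
    by (rule Bochner_Integration.integrable_bound[OF P_int]) (measurable, intro AE_I2 bound)
qed


lemma scale_integral:
  fixes g :: "'a::euclidean_space \<Rightarrow> real"
  assumes c: "c > 0" and g[measurable]: "g \<in> borel_measurable borel"
  shows "integrable lborel (\<lambda>x. g (x /\<^sub>R c)) \<longleftrightarrow> integrable lborel g"
    and "(\<integral>x. g (x /\<^sub>R c) \<partial>lborel) = c ^ DIM('a) * integral\<^sup>L lborel g"
proof -
  let ?h = "\<lambda>x::'a. g (x /\<^sub>R c)"
  let ?T = "\<lambda>x::'a. c *\<^sub>R x"
  let ?M = "density (distr lborel borel ?T) (\<lambda>_. ennreal (c ^ DIM('a)))"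
  have D: "lborel = ?M" using lborel_affine[of c 0] c by simp
  have hm[measurable]: "?h \<in> borel_measurable borel" by measurable
  have Tm[measurable]: "?T \<in> measurable lborel borel" by measurable
  have hT: "?h (?T x) = g x" for x using c by simp
  have "integrable lborel ?h \<longleftrightarrow> integrable ?M ?h"
    using arg_cong[where f="\<lambda>M. integrable M ?h", OF D] .
  also have "\<dots> \<longleftrightarrow> integrable (distr lborel borel ?T) (\<lambda>x. c ^ DIM('a) *\<^sub>R ?h x)"
    by (rule integrable_density) (use c in auto)
  also have "\<dots> \<longleftrightarrow> integrable lborel (\<lambda>x. c ^ DIM('a) *\<^sub>R ?h (?T x))"
    by (rule integrable_distr_eq) auto
  also have "\<dots> \<longleftrightarrow> integrable lborel (\<lambda>x. c ^ DIM('a) * g x)"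
    unfolding hT by simp
  also have "\<dots> \<longleftrightarrow> integrable lborel g"
    using c by simp
  finally show "integrable lborel ?h \<longleftrightarrow> integrable lborel g" .
  have "(\<integral>x. ?h x \<partial>lborel) = (\<integral>x. ?h x \<partial>?M)"
    using arg_cong[where f="\<lambda>M. integral\<^sup>L M ?h", OF D] .
  also have "\<dots> = (\<integral>x. c ^ DIM('a) *\<^sub>R ?h x \<partial>distr lborel borel ?T)"
    by (rule integral_density) (use c in auto)
  also have "\<dots> = (\<integral>x. c ^ DIM('a) *\<^sub>R ?h (?T x) \<partial>lborel)"
    by (rule integral_distr) auto
  also have "\<dots> = c ^ DIM('a) * integral\<^sup>L lborel g"
    unfolding hT by simp
  finally show "(\<integral>x. g (x /\<^sub>R c) \<partial>lborel) = c ^ DIM('a) * integral\<^sup>L lborel g" .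
qed

lemma dct_at_right:
  fixes s :: "real \<Rightarrow> 'a \<Rightarrow> real"
  assumes sm: "\<And>t. 0 < t \<Longrightarrow> s t \<in> borel_measurable M"
    and fm: "f \<in> borel_measurable M"
    and w: "integrable M w"
    and lim: "\<And>x. x \<in> space M \<Longrightarrow> ((\<lambda>t. s t x) \<longlongrightarrow> f x) (at_right 0)"
    and bound: "\<And>t x. 0 < t \<Longrightarrow> t < 1 \<Longrightarrow> x \<in> space M \<Longrightarrow> norm (s t x) \<le> w x"
  shows "((\<lambda>t. integral\<^sup>L M (s t)) \<longlongrightarrow> integral\<^sup>L M f) (at_right 0)"
proof (rule tendsto_at_right_sequentially[where b=1])
  show "(0::real) < 1" by simp
  fix S :: "nat \<Rightarrow> real"
  assume S: "\<And>n. 0 < S n" "\<And>n. S n < 1" "decseq S" "S \<longlonglongrightarrow> 0"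
  have Sf: "filterlim S (at_right 0) sequentially"
    using S(1,4) by (intro tendsto_imp_filterlim_at_right) auto
  show "(\<lambda>n. integral\<^sup>L M (s (S n))) \<longlonglongrightarrow> integral\<^sup>L M f"
  proof (rule integral_dominated_convergence[OF fm _ w])
    show "\<And>i. s (S i) \<in> borel_measurable M" using sm S(1) by auto
    show "AE x in M. (\<lambda>i. s (S i) x) \<longlonglongrightarrow> f x"
      using lim by (intro AE_I2 filterlim_compose[OF _ Sf]) auto
    show "\<And>i. AE x in M. norm (s (S i) x) \<le> w x"
      using bound S(1,2) by (intro AE_I2) auto
  qed
qed


lemma pos_base: "\<alpha> < 0 \<Longrightarrow> (r::real) \<ge> 0 \<Longrightarrow> 0 < 1 - \<alpha> * r"
proof -
  assume "\<alpha> < 0" "r \<ge> 0"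
  then have "\<alpha> * r \<le> 0" using mult_nonpos_nonneg[of \<alpha> r] by simp
  then show ?thesis by simp
qed

lemma gs_real: "\<phi> z = ereal r \<Longrightarrow> gs \<alpha> \<phi> s z = (1 - \<alpha>*(s*r)) powr (1/\<alpha>)"
  by (simp add: gs_def)

lemma gs_inf: "\<phi> z = \<infinity> \<Longrightarrow> gs \<alpha> \<phi> s z = 0"
  by (simp add: gs_def)

lemma gs_mono:
  assumes a: "\<alpha> < 0" and z: "0 \<le> \<phi> z" and s: "1 \<le> s"
  shows "0 \<le> gs \<alpha> \<phi> s z \<and> gs \<alpha> \<phi> s z \<le> gs \<alpha> \<phi> 1 z"
proof (cases "\<phi> z")
  case (real r)
  then have r: "r \<ge> 0" using z by simp
  have "r \<le> s * r" using r s by (simp add: mult_le_cancel_right1)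
  then have "\<alpha> * (s*r) \<le> \<alpha> * r" using a by (simp add: mult_left_mono_neg)
  moreover have "0 < 1 - \<alpha> * r" using a r by (rule pos_base)
  ultimately have "(1 - \<alpha>*(s*r)) powr (1/\<alpha>) \<le> (1 - \<alpha>*(1*r)) powr (1/\<alpha>)"
    using a by (intro powr_mono2') auto
  then show ?thesis using real by (simp add: gs_def)
qed (use z in \<open>auto simp: gs_def\<close>)

lemma deriv_pt:
  assumes a: "\<alpha> < 0" and r: "r \<ge> 0" and s: "s \<ge> 0"
  shows "((\<lambda>s. (1 - \<alpha>*(s*r)) powr (1/\<alpha>)) has_real_derivative (- r * (1 - \<alpha>*(s*r)) powr (1/\<alpha> - 1))) (at s)"
proof -
  have pos: "0 < 1 - \<alpha>*(s*r)" using a r s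
    by (smt (verit, best) mult_nonneg_nonneg mult_nonpos_nonneg)
  have d1: "((\<lambda>z. z powr (1/\<alpha>)) has_real_derivative (1/\<alpha>) * (1 - \<alpha>*(s*r)) powr (1/\<alpha> - 1)) (at (1 - \<alpha>*(s*r)))"
    using pos by (rule has_real_derivative_powr)
  have d2: "((\<lambda>s. 1 - \<alpha>*(s*r)) has_real_derivative (- (\<alpha> * r))) (at s)"
    by (auto intro!: derivative_eq_intros)
  have "((\<lambda>s. (1 - \<alpha>*(s*r)) powr (1/\<alpha>)) has_real_derivative ((1/\<alpha>) * (1 - \<alpha>*(s*r)) powr (1/\<alpha> - 1) * (- (\<alpha> * r)))) (at s)"
    by (rule DERIV_chain2[OF d1 d2])
  moreover have "(1/\<alpha>) * (1 - \<alpha>*(s*r)) powr (1/\<alpha> - 1) * (- (\<alpha> * r)) = - r * (1 - \<alpha>*(s*r)) powr (1/\<alpha> - 1)"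
    using a by (simp add: field_simps)
  ultimately show ?thesis by simp
qed

lemma quot_bound:
  assumes a: "(\<alpha>::real) < 0" and r: "(r::real) \<ge> 0" and t: "(t::real) > 0"
  shows "\<bar>((1 - \<alpha>*((1+t)*r)) powr (1/\<alpha>) - (1 - \<alpha>*(1*r)) powr (1/\<alpha>)) / t\<bar> \<le> r * (1 - \<alpha>*r) powr (1/\<alpha> - 1)"
proof -
  let ?f = "\<lambda>s. (1 - \<alpha>*(s*r)) powr (1/\<alpha>)"
  have "\<exists>\<xi>. 1 < \<xi> \<and> \<xi> < 1+t \<and> ?f (1+t) - ?f 1 = ((1+t) - 1) * (- r * (1 - \<alpha>*(\<xi>*r)) powr (1/\<alpha> - 1))"
    using t deriv_pt[OF a r] by (intro MVT2) auto
  then obtain \<xi> where \<xi>: "1 < \<xi>" "?f (1+t) - ?f 1 = t * (- r * (1 - \<alpha>*(\<xi>*r)) powr (1/\<alpha> - 1))"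
    by auto
  have "r \<le> \<xi> * r" using r \<xi>(1) by (simp add: mult_le_cancel_right1)
  then have "\<alpha> * (\<xi>*r) \<le> \<alpha> * r" using a by (simp add: mult_left_mono_neg)
  moreover have "0 < 1 - \<alpha> * r" using a r by (rule pos_base)
  ultimately have le: "(1 - \<alpha>*(\<xi>*r)) powr (1/\<alpha> - 1) \<le> (1 - \<alpha>*r) powr (1/\<alpha> - 1)"
    using a by (intro powr_mono2') (auto simp: divide_less_0_iff)
  have "\<bar>(?f (1+t) - ?f 1) / t\<bar> = r * (1 - \<alpha>*(\<xi>*r)) powr (1/\<alpha> - 1)"
    using \<xi>(2) t r by (simp add: abs_mult)
  also have "\<dots> \<le> r * (1 - \<alpha>*r) powr (1/\<alpha> - 1)"
    using le r by (rule mult_left_mono)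
  finally show ?thesis by simp
qed

lemma quot_lim:
  assumes a: "(\<alpha>::real) < 0" and r: "(r::real) \<ge> 0"
  shows "((\<lambda>t. ((1 - \<alpha>*((1+t)*r)) powr (1/\<alpha>) - (1 - \<alpha>*(1*r)) powr (1/\<alpha>)) / t) \<longlongrightarrow> - r * (1 - \<alpha>*r) powr (1/\<alpha> - 1)) (at_right 0)"
proof -
  have "((\<lambda>t. ((1 - \<alpha>*((1+t)*r)) powr (1/\<alpha>) - (1 - \<alpha>*(1*r)) powr (1/\<alpha>)) / t) \<longlongrightarrow> - r * (1 - \<alpha>*(1*r)) powr (1/\<alpha> - 1)) (at 0)"
    using deriv_pt[OF a r, of 1] unfolding DERIV_def by simp
  then have L: "((\<lambda>t. ((1 - \<alpha>*((1+t)*r)) powr (1/\<alpha>) - (1 - \<alpha>*(1*r)) powr (1/\<alpha>)) / t) \<longlongrightarrow> - r * (1 - \<alpha>*(1*r)) powr (1/\<alpha> - 1)) (at_right 0)"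
    by (rule tendsto_mono[OF at_le[OF subset_UNIV]])
  then show ?thesis by simp
qed

definition wfn :: "real \<Rightarrow> ('a \<Rightarrow> ereal) \<Rightarrow> 'a \<Rightarrow> real" where
  "wfn \<alpha> \<phi> z = real_of_ereal (\<phi> z) * gs \<alpha> \<phi> 1 z powr (1 - \<alpha>)"

lemma wfn_real:
  assumes a: "\<alpha> < 0" and z: "\<phi> z = ereal r" "r \<ge> 0"
  shows "wfn \<alpha> \<phi> z = r * (1 - \<alpha>*r) powr (1/\<alpha> - 1)"
proof -
  have pos: "0 < 1 - \<alpha> * r" using a z(2) by (rule pos_base)
  have "gs \<alpha> \<phi> 1 z powr (1 - \<alpha>) = ((1 - \<alpha>*r) powr (1/\<alpha>)) powr (1 - \<alpha>)"
    using z by (simp add: gs_def)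
  also have "\<dots> = (1 - \<alpha>*r) powr (1/\<alpha> - 1)"
    using a pos by (simp add: powr_powr field_simps)
  finally show ?thesis using z by (simp add: wfn_def)
qed

lemma wfn_inf: "\<phi> z = \<infinity> \<Longrightarrow> wfn \<alpha> \<phi> z = 0"
  by (simp add: wfn_def)

lemma wfn_le:
  assumes a: "\<alpha> < 0" and z: "0 \<le> \<phi> z"
  shows "0 \<le> wfn \<alpha> \<phi> z \<and> wfn \<alpha> \<phi> z \<le> (-1/\<alpha>) * gs \<alpha> \<phi> 1 z"
proof (cases "\<phi> z")
  case (real r)
  then have r: "r \<ge> 0" using z by simp
  have pos: "0 < 1 - \<alpha> * r" using a r by (rule pos_base)
  have "(1 - \<alpha>*r) powr (1/\<alpha> - 1) = (1 - \<alpha>*r) powr (1/\<alpha>) / (1 - \<alpha>*r)"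
    using pos by (simp add: powr_diff)
  then have "r * (1 - \<alpha>*r) powr (1/\<alpha> - 1) = (r / (1 - \<alpha>*r)) * (1 - \<alpha>*r) powr (1/\<alpha>)"
    by simp
  also have "\<dots> \<le> (-1/\<alpha>) * (1 - \<alpha>*r) powr (1/\<alpha>)"
  proof (rule mult_right_mono)
    show "r / (1 - \<alpha> * r) \<le> - 1 / \<alpha>"
      using a pos r by (simp add: field_simps)
  qed simp
  finally show ?thesis using wfn_real[of \<alpha> \<phi> z r, OF a real r] real r pos by (simp add: gs_def)
qed (use z in \<open>auto simp: wfn_def gs_def\<close>)


lemma growth:
  fixes \<phi> :: "'a::euclidean_space \<Rightarrow> ereal"
  assumes a: "\<alpha> < 0" and nn: "\<forall>x. \<phi> x \<ge> 0" and co: "coercive \<phi>"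
  shows "\<exists>K>0. \<forall>z. gs \<alpha> \<phi> 1 z \<le> K * (1 + norm z) powr (1/\<alpha>)"
proof -
  have "Liminf at_infinity (\<lambda>x. \<phi> x / ereal (norm x)) > 0" using co by (simp add: coercive_def)
  then obtain c where c: "0 < ereal c" "ereal c < Liminf at_infinity (\<lambda>x. \<phi> x / ereal (norm x))"
    using ereal_dense2 by blast
  then have c0: "c > 0" by simp
  have "eventually (\<lambda>x. \<phi> x / ereal (norm x) > ereal c) at_infinity" by (rule less_LiminfD[OF c(2)])
  then obtain b where b: "\<And>x. b \<le> norm x \<Longrightarrow> \<phi> x / ereal (norm x) > ereal c"
    by (auto simp: eventually_at_infinity)
  define R where "R = max b 1"
  have R0: "R \<ge> 1" by (simp add: R_def)
  have r0: "r \<ge> 0" if "\<phi> z = ereal r" for z r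
    using nn[rule_format, of z] that by simp
  have lowR: "r \<ge> c * norm z - c * R" if z: "\<phi> z = ereal r" for z r
  proof (cases "norm z \<ge> R")
    case True
    then have nz: "norm z > 0" "b \<le> norm z" using R_def by auto
    have "ereal c < ereal r / ereal (norm z)" using b[OF nz(2)] z by simp
    then have "c < r / norm z" using nz by simp
    then have "c * norm z < r" using nz by (simp add: field_simps)
    moreover have "c * R \<ge> 0" using c0 R0 by simp
    ultimately show ?thesis by linarith
  next
    case False
    then have "c * norm z \<le> c * R" using c0 by simp
    moreover have "r \<ge> 0" using r0[OF z] .
    ultimately show ?thesis by linarith
  qed
  define u where "u = -\<alpha> * c"
  have u: "u > 0" using a c0 by (simp add: u_def mult_neg_pos)
  define \<kappa> where "\<kappa> = min 1 u / (1 + u*R)"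
  have uR: "1 + u*R > 0" using u R0 by (smt (verit) mult_pos_pos)
  have \<kappa>: "\<kappa> > 0" using u uR by (simp add: \<kappa>_def)
  have key: "\<kappa> * (1 + norm z) \<le> 1 - \<alpha> * r" if z: "\<phi> z = ereal r" for z r
  proof -
    have rr: "r \<ge> 0" using r0[OF z] .
    have A1: "1 - \<alpha>*r \<ge> 1" using a rr by (smt (verit) mult_nonpos_nonneg)
    have "-\<alpha> * r \<ge> -\<alpha> * (c * norm z - c * R)"
      using lowR[OF z] a by (intro mult_left_mono) auto
    then have A2: "1 - \<alpha>*r \<ge> 1 + u * norm z - u * R" by (simp add: u_def algebra_simps)
    have "u*R*(1 - \<alpha>*r) \<ge> u*R" using A1 u R0 by simp
    then have A3: "(1 + u*R) * (1 - \<alpha>*r) \<ge> 1 + u * norm z" using A2 by (simp add: algebra_simps)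
    have A4: "min 1 u * (1 + norm z) \<le> 1 + u * norm z"
    proof -
      have "min 1 u * 1 \<le> 1" by simp
      moreover have "min 1 u * norm z \<le> u * norm z" by (intro mult_right_mono) auto
      ultimately show ?thesis by (simp add: algebra_simps)
    qed
    have "\<kappa> * (1 + norm z) = min 1 u * (1 + norm z) / (1 + u*R)" by (simp add: \<kappa>_def)
    also have "\<dots> \<le> (1 + u * norm z) / (1 + u*R)" using A4 uR by (simp add: divide_right_mono)
    also have "\<dots> \<le> 1 - \<alpha> * r" using A3 uR by (simp add: divide_le_eq mult.commute)
    finally show ?thesis .
  qed
  show ?thesis
  proof (intro exI[of _ "\<kappa> powr (1/\<alpha>)"] conjI allI)
    show "\<kappa> powr (1/\<alpha>) > 0" using \<kappa> by simp
    fix z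
    show "gs \<alpha> \<phi> 1 z \<le> \<kappa> powr (1/\<alpha>) * (1 + norm z) powr (1/\<alpha>)"
    proof (cases "\<phi> z")
      case (real r)
      have pos: "0 < \<kappa> * (1 + norm z)" using \<kappa> by (smt (verit) mult_pos_pos norm_ge_zero)
      have "gs \<alpha> \<phi> 1 z = (1 - \<alpha> * r) powr (1/\<alpha>)" using real by (simp add: gs_def)
      also have "\<dots> \<le> (\<kappa> * (1 + norm z)) powr (1/\<alpha>)"
        using key[OF real] pos a by (intro powr_mono2') auto
      also have "\<dots> = \<kappa> powr (1/\<alpha>) * (1 + norm z) powr (1/\<alpha>)"
        using \<kappa> by (simp add: powr_mult)
      finally show ?thesis .
    next
      case PInf then show ?thesis by (simp add: gs_def)
    next
      case MInf then show ?thesis using nn[rule_format, of z] by simp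
    qed
  qed
qed

lemma gs_integrable:
  fixes \<phi> :: "'a::euclidean_space \<Rightarrow> ereal"
  assumes cv: "\<phi> \<in> Conv" and a: "\<alpha> < 0" and nn: "\<forall>x. \<phi> x \<ge> 0" and co: "coercive \<phi>"
    and p: "1/\<alpha> < - real DIM('a)" and s: "1 \<le> s"
  shows "integrable lborel (gs \<alpha> \<phi> s)"
proof -
  obtain K where K: "K > 0" "\<And>z. gs \<alpha> \<phi> 1 z \<le> K * (1 + norm z) powr (1/\<alpha>)"
    using growth[OF a nn co] by blast
  have I: "integrable lborel (\<lambda>z::'a. K * (1 + norm z) powr (1/\<alpha>))"
    using integrable_decay[OF p] by simp
  show ?thesis
  proof (rule Bochner_Integration.integrable_bound[OF I])
    show "gs \<alpha> \<phi> s \<in> borel_measurable lborel" using gs_measurable[OF cv] by simp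
    show "AE x in lborel. norm (gs \<alpha> \<phi> s x) \<le> norm (K * (1 + norm x) powr (1/\<alpha>))"
    proof (intro AE_I2)
      fix x :: 'a
      have "0 \<le> gs \<alpha> \<phi> s x \<and> gs \<alpha> \<phi> s x \<le> gs \<alpha> \<phi> 1 x" using gs_mono[of \<alpha> \<phi> x s, OF a nn[rule_format, of x] s] .
      then show "norm (gs \<alpha> \<phi> s x) \<le> norm (K * (1 + norm x) powr (1/\<alpha>))"
        using K(2)[of x] K(1) by simp
    qed
  qed
qed

lemma wfn_measurable:
  fixes \<phi> :: "'a::euclidean_space \<Rightarrow> ereal"
  assumes cv: "\<phi> \<in> Conv"
  shows "wfn \<alpha> \<phi> \<in> borel_measurable borel"
proof -
  have [measurable]: "\<phi> \<in> borel_measurable borel" by (rule Conv_measurable[OF cv])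
  have [measurable]: "gs \<alpha> \<phi> 1 \<in> borel_measurable borel" by (rule gs_measurable[OF cv])
  show ?thesis unfolding wfn_def[abs_def] by measurable
qed

lemma wfn_integrable:
  fixes \<phi> :: "'a::euclidean_space \<Rightarrow> ereal"
  assumes cv: "\<phi> \<in> Conv" and a: "\<alpha> < 0" and nn: "\<forall>x. \<phi> x \<ge> 0" and co: "coercive \<phi>"
    and p: "1/\<alpha> < - real DIM('a)"
  shows "integrable lborel (wfn \<alpha> \<phi>)"
proof (rule Bochner_Integration.integrable_bound)
  show "integrable lborel (\<lambda>z. (-1/\<alpha>) * gs \<alpha> \<phi> 1 z)"
    using gs_integrable[OF cv a nn co p order_refl] by simp
  show "wfn \<alpha> \<phi> \<in> borel_measurable lborel" using wfn_measurable[OF cv] by simp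
  show "AE x in lborel. norm (wfn \<alpha> \<phi> x) \<le> norm ((-1/\<alpha>) * gs \<alpha> \<phi> 1 x)"
  proof (intro AE_I2)
    fix x :: 'a
    have W: "0 \<le> wfn \<alpha> \<phi> x \<and> wfn \<alpha> \<phi> x \<le> (-1/\<alpha>) * gs \<alpha> \<phi> 1 x" using wfn_le[of \<alpha> \<phi> x, OF a nn[rule_format, of x]] .
    have g0: "0 \<le> gs \<alpha> \<phi> 1 x" using gs_mono[of \<alpha> \<phi> x 1, OF a nn[rule_format, of x]] by simp
    have "0 \<le> (-1/\<alpha>) * gs \<alpha> \<phi> 1 x" using g0 a by (intro mult_nonneg_nonneg) auto
    then show "norm (wfn \<alpha> \<phi> x) \<le> norm ((-1/\<alpha>) * gs \<alpha> \<phi> 1 x)" using W by (metis abs_of_nonneg real_norm_def)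
  qed
qed


lemma F_quot_lim:
  fixes \<phi> :: "'a::euclidean_space \<Rightarrow> ereal"
  assumes cv: "\<phi> \<in> Conv" and a: "\<alpha> < 0" and nn: "\<forall>x. \<phi> x \<ge> 0" and co: "coercive \<phi>"
    and p: "1/\<alpha> < - real DIM('a)"
  shows "((\<lambda>t. (integral\<^sup>L lborel (gs \<alpha> \<phi> (1+t)) - integral\<^sup>L lborel (gs \<alpha> \<phi> 1)) / t)
           \<longlongrightarrow> - integral\<^sup>L lborel (wfn \<alpha> \<phi>)) (at_right 0)"
proof -
  let ?s = "\<lambda>t z. (gs \<alpha> \<phi> (1+t) z - gs \<alpha> \<phi> 1 z) / t"
  have eq: "eventually (\<lambda>t. integral\<^sup>L lborel (?s t) =
      (integral\<^sup>L lborel (gs \<alpha> \<phi> (1+t)) - integral\<^sup>L lborel (gs \<alpha> \<phi> 1)) / t) (at_right 0)"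
  proof (rule eventually_mono[OF eventually_at_right_less])
    fix t :: real assume t: "0 < t"
    have I1: "integrable lborel (gs \<alpha> \<phi> (1+t))" using gs_integrable[OF cv a nn co p] t by simp
    have I2: "integrable lborel (gs \<alpha> \<phi> 1)" using gs_integrable[OF cv a nn co p] by simp
    show "integral\<^sup>L lborel (?s t) = (integral\<^sup>L lborel (gs \<alpha> \<phi> (1+t)) - integral\<^sup>L lborel (gs \<alpha> \<phi> 1)) / t"
      using I1 I2 by (simp add: integral_diff)
  qed
  have "((\<lambda>t. integral\<^sup>L lborel (?s t)) \<longlongrightarrow> integral\<^sup>L lborel (\<lambda>z. - wfn \<alpha> \<phi> z)) (at_right 0)"
  proof (rule dct_at_right)
    have [measurable]: "gs \<alpha> \<phi> s \<in> borel_measurable borel" for s by (rule gs_measurable[OF cv])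
    have [measurable]: "wfn \<alpha> \<phi> \<in> borel_measurable borel" by (rule wfn_measurable[OF cv])
    show "\<And>t. 0 < t \<Longrightarrow> ?s t \<in> borel_measurable lborel" by simp
    show "(\<lambda>z. - wfn \<alpha> \<phi> z) \<in> borel_measurable lborel" by simp
    show "integrable lborel (wfn \<alpha> \<phi>)" by (rule wfn_integrable[OF cv a nn co p])
  next
    fix z :: 'a
    show "((\<lambda>t. ?s t z) \<longlongrightarrow> - wfn \<alpha> \<phi> z) (at_right 0)"
    proof (cases "\<phi> z")
      case (real r)
      then have r: "r \<ge> 0" using nn[rule_format, of z] by simp
      show ?thesis
        using quot_lim[OF a r] unfolding gs_real[of \<phi> z r, OF real] wfn_real[of \<alpha> \<phi> z r, OF a real r] by simp
    next
      case PInf then show ?thesis by (simp add: gs_inf wfn_inf)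
    next
      case MInf then show ?thesis using nn[rule_format, of z] by simp
    qed
  next
    fix t :: real and z :: 'a assume t: "0 < t" "t < 1"
    show "norm (?s t z) \<le> wfn \<alpha> \<phi> z"
    proof (cases "\<phi> z")
      case (real r)
      then have r: "r \<ge> 0" using nn[rule_format, of z] by simp
      show ?thesis
        using quot_bound[OF a r t(1)] unfolding gs_real[of \<phi> z r, OF real] wfn_real[of \<alpha> \<phi> z r, OF a real r] by simp
    next
      case PInf then show ?thesis by (simp add: gs_inf wfn_inf)
    next
      case MInf then show ?thesis using nn[rule_format, of z] by simp
    qed
  qed
  then have "((\<lambda>t. integral\<^sup>L lborel (?s t)) \<longlongrightarrow> - integral\<^sup>L lborel (wfn \<alpha> \<phi>)) (at_right 0)"
    by simp
  then show ?thesis using tendsto_cong[OF eq] by simp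
qed

theorem proposition3p2:
  fixes \<phi> :: "real ^ 'n \<Rightarrow> ereal" and \<alpha> :: real
  assumes "- 1 / real CARD('n) < \<alpha>" and "\<alpha> < 0"
    and "\<phi> \<in> Conv" and "\<forall>x. \<phi> x \<ge> 0" and "coercive \<phi>"
  defines "f \<equiv> alpha_fn \<alpha> \<phi>"
  shows "integrable lborel f
    \<and> integrable lborel (\<lambda>x. real_of_ereal (\<phi> x) * f x powr (1 - \<alpha>))
    \<and> eventually (\<lambda>t. integrable lborel (alpha_sum \<alpha> \<phi> t \<phi>)) (at_right 0)
    \<and> ((\<lambda>t. (J (alpha_sum \<alpha> \<phi> t \<phi>) - J f) / t) \<longlongrightarrow>
           real CARD('n) * J f - integral\<^sup>L lborel (\<lambda>x. real_of_ereal (\<phi> x) * f x powr (1 - \<alpha>)))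
         (at_right 0)"
proof -
  note a = assms(2) and cv = assms(3) and nn = assms(4) and co = assms(5)
  define n where "n = CARD('n)"
  have n1: "real n \<ge> 1" unfolding n_def by simp
  have dim: "DIM(real^'n) = n" by (simp add: n_def)
  have p: "1/\<alpha> < - real DIM(real^'n)"
  proof -
    have "-1 < real n * \<alpha>" using assms(1) n1 by (simp add: n_def field_simps)
    then have "-1/\<alpha> > real n" using a by (simp add: field_simps)
    then show ?thesis using dim by (simp add: field_simps)
  qed
  have fg: "f = gs \<alpha> \<phi> 1" by (simp add: f_def alpha_fn_gs1)
  have wfe: "(\<lambda>x. real_of_ereal (\<phi> x) * f x powr (1 - \<alpha>)) = wfn \<alpha> \<phi>"
    by (simp add: fg wfn_def[abs_def])
  have [measurable]: "gs \<alpha> \<phi> s \<in> borel_measurable borel" for s by (rule gs_measurable[OF cv])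
  have Is: "integrable lborel (gs \<alpha> \<phi> s)" if "1 \<le> s" for s by (rule gs_integrable[OF cv a nn co p that])
  have AS: "alpha_sum \<alpha> \<phi> t \<phi> = (\<lambda>x. gs \<alpha> \<phi> (1+t) (x /\<^sub>R (1+t)))" if "t > 0" for t
    using alpha_sum_eq[OF cv that] by (simp add: fun_eq_iff)
  have I3: "integrable lborel (alpha_sum \<alpha> \<phi> t \<phi>)" if "t > 0" for t
    using scale_integral(1)[of "1+t" "gs \<alpha> \<phi> (1+t)"] Is[of "1+t"] AS[OF that] that by simp
  have JS: "J (alpha_sum \<alpha> \<phi> t \<phi>) = (1+t) ^ n * integral\<^sup>L lborel (gs \<alpha> \<phi> (1+t))" if "t > 0" for t
    using scale_integral(2)[of "1+t" "gs \<alpha> \<phi> (1+t)"] AS[OF that] that dim by (simp add: J_def)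
  define F1 where "F1 = integral\<^sup>L lborel (gs \<alpha> \<phi> 1)"
  define Q where "Q = (\<lambda>t. (integral\<^sup>L lborel (gs \<alpha> \<phi> (1+t)) - F1) / t)"
  define L where "L = - integral\<^sup>L lborel (wfn \<alpha> \<phi>)"
  have Jf: "J f = F1" by (simp add: J_def fg F1_def)
  have QL: "(Q \<longlongrightarrow> L) (at_right 0)"
    unfolding Q_def L_def F1_def using F_quot_lim[OF cv a nn co p] .
  have Pn: "((\<lambda>t. ((1+t)^n - 1)/t) \<longlongrightarrow> real n) (at_right 0)"
  proof -
    have "((\<lambda>x::real. x^n) has_real_derivative real n) (at 1)"
      using DERIV_pow[of n 1] by simp
    then have "((\<lambda>h. ((1+h)^n - 1^n)/h) \<longlongrightarrow> real n) (at 0)"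
      unfolding DERIV_def by simp
    then have "((\<lambda>h. ((1+h)^n - 1^n)/h) \<longlongrightarrow> real n) (at_right 0)"
      by (rule tendsto_mono[OF at_le[OF subset_UNIV]])
    then show ?thesis by simp
  qed
  have T: "((\<lambda>t::real. t) \<longlongrightarrow> 0) (at_right 0)" by (rule tendsto_ident_at)
  have lim: "((\<lambda>t. ((1+t)^n - 1)/t * (F1 + t * Q t) + Q t) \<longlongrightarrow> real n * (F1 + 0 * L) + L) (at_right 0)"
    by (intro tendsto_intros Pn QL T)
  have ev: "eventually (\<lambda>t. ((1+t)^n - 1)/t * (F1 + t * Q t) + Q t = (J (alpha_sum \<alpha> \<phi> t \<phi>) - J f) / t) (at_right 0)"
  proof (rule eventually_mono[OF eventually_at_right_less])
    fix t :: real assume t: "0 < t"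
    have "F1 + t * Q t = integral\<^sup>L lborel (gs \<alpha> \<phi> (1+t))" using t by (simp add: Q_def)
    then show "((1+t)^n - 1)/t * (F1 + t * Q t) + Q t = (J (alpha_sum \<alpha> \<phi> t \<phi>) - J f) / t"
      using t unfolding JS[OF t] Jf Q_def by (simp add: field_simps)
  qed
  have lim2: "((\<lambda>t. (J (alpha_sum \<alpha> \<phi> t \<phi>) - J f) / t) \<longlongrightarrow> real n * J f - integral\<^sup>L lborel (wfn \<alpha> \<phi>)) (at_right 0)"
    using tendsto_cong[OF ev] lim by (simp add: Jf L_def)
  show ?thesis
    unfolding wfe
  proof (intro conjI)
    show "integrable lborel f" using Is[of 1] fg by simp
    show "integrable lborel (wfn \<alpha> \<phi>)" by (rule wfn_integrable[OF cv a nn co p])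
    show "eventually (\<lambda>t. integrable lborel (alpha_sum \<alpha> \<phi> t \<phi>)) (at_right 0)"
      by (rule eventually_mono[OF eventually_at_right_less]) (rule I3)
    show "((\<lambda>t. (J (alpha_sum \<alpha> \<phi> t \<phi>) - J f) / t) \<longlongrightarrow> real CARD('n) * J f - integral\<^sup>L lborel (wfn \<alpha> \<phi>)) (at_right 0)"
      using lim2 by (simp add: n_def)
  qed
qed

end
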